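(* Let $N, M, K$ be positive integers, let $\mathbf{a} \in \mathbb{C}^{N}$ and $\mathbf{B} \in \mathbb{C}^{N \times M}$ be constants, and write $\mathbf{A} = \mathrm{diag}(\mathbf{a})$. For a diagonal matrix $\mathbf{X} \in \mathbb{C}^{N \times N}$ write $\mathbf{x} = \mathrm{diag}(\mathbf{X}) \in \mathbb{C}^N$ for its vector of diagonal entries. Fix a diagonal matrix $\mathbf{X}_0 \in \mathbb{C}^{N\times N}$ with $\mathbf{x}_0 = \mathrm{diag}(\mathbf{X}_0)$ and a matrix $\mathbf{Y}_0 \in \mathbb{C}^{M \times K}$. Define, for diagonal $\mathbf{X} \in \mathbb{C}^{N\times N}$ and $\mathbf{Y} \in \mathbb{C}^{M \times K}$, \[ \begin{aligned} \Omega_{\mathbf{a},\mathbf{B}}(\mathbf{X},\mathbf{X}_0,\mathbf{Y},\mathbf{Y}_0) \triangleq\ & \Re\Big\{ \big(\mathbf{Y}_0\mathbf{Y}_0^{\mathsf H}\mathbf{B}^{\mathsf H}\mathbf{A}^*\mathbf{x}_0^* + \mathbf{B}^{\mathsf H}\mathbf{A}^*\mathbf{x}_0^*\big)^{\mathsf H}\big(\mathbf{Y}\mathbf{Y}_0^{\mathsf H}\mathbf{B}^{\mathsf H}\mathbf{A}^*\mathbf{x}_0^* + \mathbf{B}^{\mathsf H}\mathbf{A}^*\mathbf{x}^*\big)\Big\} \\ & - \tfrac{1}{2}\big\|\mathbf{Y}\mathbf{Y}_0^{\mathsf H}\mathbf{B}^{\mathsf H}\mathbf{A}^*\mathbf{x}_0^*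 - \mathbf{B}^{\mathsf H}\mathbf{A}^*\mathbf{x}^*\big\|_2^2 - \big\|\mathbf{Y}_0^{\mathsf H}\mathbf{B}^{\mathsf H}\mathbf{A}^*\mathbf{x}_0^*\big\|_2^2 \\ & - \tfrac{1}{2}\big\|\mathbf{Y}_0\mathbf{Y}_0^{\mathsf H}\mathbf{B}^{\mathsf H}\mathbf{A}^*\mathbf{x}_0^* + \mathbf{B}^{\mathsf H}\mathbf{A}^*\mathbf{x}_0^*\big\|_2^2 . \end{aligned} \] Then $\Omega_{\mathbf{a},\mathbf{B}}(\cdot,\mathbf{X}_0,\cdot,\mathbf{Y}_0)$ is jointly concave in $(\mathbf{X},\mathbf{Y})$ (viewed as a real-valued function of the real and imaginary parts of the entries of $\mathbf{x}$ and $\mathbf{Y}$), and for every diagonal $\mathbf{X} \in \mathbb{C}^{N\times N}$ and every $\mathbf{Y} \in \mathbb{C}^{M\times K}$, \[ \|\mathbf{a}^{\mathsf T}\mathbf{X}\mathbf{B}\mathbf{Y}\|_2^2 \ \ge\ \Omega_{\mathbf{a},\mathbf{B}}(\mathbf{X},\mathbf{X}_0,\mathbf{Y},\mathbf{Y}_0). \]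
   Context: $(\cdot)^*$ denotes entrywise complex conjugation, $(\cdot)^{\mathsf T}$ transpose, $(\cdot)^{\mathsf H}$ conjugate transpose, $\|\cdot\|_2$ the Euclidean norm, $\Re\{\cdot\}$ the real part. For a vector $\mathbf{v}$, $\mathrm{diag}(\mathbf{v})$ is the diagonal matrix with $\mathbf{v}$ on its diagonal; for a diagonal matrix, $\mathrm{diag}(\cdot)$ is the vector of its diagonal entries. (In the paper this bound is written compactly via $\boldsymbol{\alpha}_{\mathbf{a},\mathbf{B}}(\mathbf{Z}_1,\mathbf{Z}_2,\mathbf{Z}_3,\mathbf{Z}_4) = \mathbf{Z}_3\mathbf{Z}_4^{\mathsf H}\mathbf{B}^{\mathsf H}\mathrm{diag}(\mathbf{a}^* )\mathrm{diag}(\mathbf{Z}_2^* ) + \mathbf{B}^{\mathsf H}\mathrm{diag}(\mathbf{a}^* )\mathrm{diag}(\mathbf{Z}_1^* )$ as $\Re\{\boldsymbol{\alpha}^{\mathsf H}(\mathbf{X}_0,\mathbf{X}_0,\mathbf{Y}_0,\mathbf{Y}_0)\boldsymbol{\alpha}(\mathbf{X},\mathbf{X}_0,\mathbf{Y},\mathbf{Y}_0)\} - \tfrac12\|\boldsymbol{\alpha}(-\mathbf{X},\mathbf{X}_0,\mathbf{Y},\mathbf{Y}_0)\|_2^2 - \|\boldsymbol{\alpha}(\mathbf{0},\mathbf{X}_0,\mathbf{I},\mathbf{Y}_0)\|_2^2 - \tfrac12\|\boldsymbol{\alpha}(\mathbf{X}_0,\mathbf{X}_0,\mathbf{Y}_0,\mathbf{Y}_0)\|_2^2$,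 which equals the expression above.) *)

theory Defs
  imports "HOL-Analysis.Analysis"
begin

text \<open>Vectors in C^n are complex^'n; an N x M matrix is complex^'m^'n (row index 'n).
  The Euclidean norm of complex^'n is the library norm.\<close>

definition vconj :: "complex^'n \<Rightarrow> complex^'n" where
  "vconj v = (\<chi> i. cnj (v$i))"

definition mconj :: "complex^'m^'n \<Rightarrow> complex^'m^'n" where
  "mconj A = (\<chi> i j. cnj (A$i$j))"

definition hconj :: "complex^'m^'n \<Rightarrow> complex^'n^'m" where
  "hconj A = (\<chi> i j. cnj (A$j$i))"

definition diag_mat :: "complex^'n \<Rightarrow> complex^'n^'n" where
  "diag_mat v = (\<chi> i j. if i = j then v$i else 0)"

definition diag_vec :: "complex^'n^'n \<Rightarrow> complex^'n" where
  "diag_vec X = (\<chi> i. X$i$i)"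

definition is_diag :: "complex^'n^'n \<Rightarrow> bool" where
  "is_diag X \<longleftrightarrow> (\<forall>i j. i \<noteq> j \<longrightarrow> X$i$j = 0)"

definition hdot :: "complex^'n \<Rightarrow> complex^'n \<Rightarrow> complex" where
  "hdot v w = (\<Sum>i\<in>UNIV. cnj (v$i) * w$i)"

definition Omega ::
  "complex^'n \<Rightarrow> complex^'m^'n \<Rightarrow> complex^'n^'n \<Rightarrow> complex^'n^'n
     \<Rightarrow> complex^'k^'m \<Rightarrow> complex^'k^'m \<Rightarrow> real" where
  "Omega a B X X0 Y Y0 =
    (let A = diag_mat a; x = diag_vec X; x0 = diag_vec X0;
         c0 = ((hconj B ** mconj A) *v vconj x0);
         c = ((hconj B ** mconj A) *v vconj x);
         u = ((Y0 ** hconj Y0) *v c0) + c0;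
         w = ((Y ** hconj Y0) *v c0) + c
     in Re (hdot u w)
        - 1/2 * (norm (((Y ** hconj Y0) *v c0) - c))^2
        - (norm (hconj Y0 *v c0))^2
        - 1/2 * (norm u)^2)"

end

theory Submission
  imports Defs
begin

lemma inner_hdot: "inner (v::complex^'n) w = Re (hdot v w)"
  by (simp add: inner_vec_def hdot_def inner_complex_def Re_sum)

lemma hdot_adj: "hdot (hconj Y *v v) w = hdot v (Y *v w)"
  by (simp add: hdot_def hconj_def matrix_vector_mult_def sum_distrib_left sum_distrib_right
       mult_ac sum_divide_distrib) (rule sum.swap)

lemma Re_hdot_sym: "Re (hdot v w) = Re (hdot w v)"
  by (simp add: hdot_def Re_sum mult.commute)

lemma lin_mv: "(M::complex^'m^'n) *v (t *\<^sub>R u + s *\<^sub>R v) = t *\<^sub>R (M *v u) + s *\<^sub>R (M *v v)"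
  unfolding vec_eq_iff by (simp add: matrix_vector_mult_def) (simp add: scaleR_conv_of_real sum.distrib sum_distrib_left algebra_simps)

lemma lin_mv1: "(M::complex^'m^'n) *v (t *\<^sub>R u) = t *\<^sub>R (M *v u)"
  using lin_mv[of M t u 0 u] by simp

lemma lin_vconj: "vconj (t *\<^sub>R u + s *\<^sub>R v) = t *\<^sub>R vconj u + s *\<^sub>R vconj v"
  by (simp add: vec_eq_iff vconj_def)

lemma lin_mm: "((t *\<^sub>R Y + s *\<^sub>R Z) ** (M::complex^'k^'m)) *v v = t *\<^sub>R ((Y ** M) *v v) + s *\<^sub>R ((Z ** M) *v v)"
  unfolding vec_eq_iff by (simp add: matrix_vector_mult_def matrix_matrix_mult_def) (simp add: scaleR_conv_of_real sum.distrib sum_distrib_left sum_distrib_right algebra_simps)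

lemma diag_vec_mat[simp]: "diag_vec (diag_mat x) = x"
  by (simp add: vec_eq_iff diag_vec_def diag_mat_def)

lemma diag_mult: "diag_mat x ** B = (\<chi> i l. x$i * B$i$l)"
proof -
  have "\<And>i l. (\<Sum>k\<in>UNIV. (if i = k then x$i else 0) * B$k$l) = x$i * B$i$l"
  proof -
    fix i l
    have "(\<Sum>k\<in>UNIV. (if i = k then x$i else 0) * B$k$l) = (\<Sum>k\<in>UNIV. if i = k then x$i * B$k$l else 0)"
      by (rule sum.cong) auto
    then show "?thesis i l" by simp
  qed
  then show ?thesis by (simp add: vec_eq_iff matrix_matrix_mult_def diag_mat_def)
qed

lemma lhs_eq:
  assumes "is_diag X"
  shows "norm (a v* (X ** B ** Y)) = norm (hconj Y *v ((hconj B ** mconj (diag_mat a)) *v vconj (diag_vec X)))"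
proof -
  have "\<And>j. (hconj Y *v ((hconj B ** mconj (diag_mat a)) *v vconj (diag_vec X)))$j = cnj ((a v* (X ** B ** Y))$j)"
  proof -
    fix j
    have X: "X = diag_mat (diag_vec X)" using assms
      by (auto simp: vec_eq_iff is_diag_def diag_mat_def diag_vec_def)
    show "?thesis j"
      apply (subst (2) X)
      apply (simp only: diag_mult)
      apply (simp add: vector_matrix_mult_def matrix_vector_mult_def matrix_matrix_mult_def hconj_def mconj_def vconj_def diag_vec_def diag_mult)
      apply (simp add: diag_mat_def if_distrib cong: if_cong)
      apply (simp add: sum_distrib_left sum_distrib_right mult_ac)
      apply (rule sum.swap)
      done
  qed
  then show ?thesis by (simp add: norm_vec_def)
qed
lemma normsq_convex:
  fixes a b :: "'a::real_inner"
  assumes "u \<ge> 0" "v \<ge> 0" "u + v = 1"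
  shows "norm (u *\<^sub>R a + v *\<^sub>R b)^2 \<le> u * norm a^2 + v * norm b^2"
proof -
  have e: "u * norm a^2 + v * norm b^2 - norm (u *\<^sub>R a + v *\<^sub>R b)^2 = u * v * norm (a - b)^2"
  proof -
    have "u * norm a^2 + v * norm b^2 - norm (u *\<^sub>R a + v *\<^sub>R b)^2
      = u * (u + v) * inner a a + v * (u + v) * inner b b - (u * u * inner a a + 2 * u * v * inner a b + v * v * inner b b)"
      using assms by (simp add: power2_norm_eq_inner inner_add inner_commute algebra_simps)
    also have "\<dots> = u * v * norm (a - b)^2"
      by (simp add: power2_norm_eq_inner inner_diff inner_commute algebra_simps)
    finally show ?thesis .
  qed
  have "u * v * norm (a - b)^2 \<ge> 0" using assms by simp
  with e show ?thesis by linarith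
qed

lemma concave_gen:
  fixes W D :: "'a::real_vector \<Rightarrow> 'b::real_inner"
  assumes W: "\<And>p q s t. s + t = 1 \<Longrightarrow> W (s *\<^sub>R p + t *\<^sub>R q) = s *\<^sub>R W p + t *\<^sub>R W q"
    and D: "\<And>p q s t. s + t = 1 \<Longrightarrow> D (s *\<^sub>R p + t *\<^sub>R q) = s *\<^sub>R D p + t *\<^sub>R D q"
  shows "concave_on UNIV (\<lambda>p. inner w (W p) - 1/2 * norm (D p)^2 - K)"
  unfolding concave_on_iff
proof (intro conjI ballI allI impI)
  fix p q and s t :: real
  assume st: "s \<ge> 0" "t \<ge> 0" "s + t = 1"
  have n: "norm (D (s *\<^sub>R p + t *\<^sub>R q))^2 \<le> s * norm (D p)^2 + t * norm (D q)^2"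
    using normsq_convex[OF st] D[OF st(3)] by simp
  have i: "inner w (W (s *\<^sub>R p + t *\<^sub>R q)) = s * inner w (W p) + t * inner w (W q)"
    using W[OF st(3)] by (simp add: inner_add inner_scaleR_right)
  have K: "K = s * K + t * K" using st(3) by (metis distrib_right mult_1)
  show "s * (inner w (W p) - 1/2 * norm (D p)^2 - K) + t * (inner w (W q) - 1/2 * norm (D q)^2 - K)
     \<le> inner w (W (s *\<^sub>R p + t *\<^sub>R q)) - 1/2 * norm (D (s *\<^sub>R p + t *\<^sub>R q))^2 - K"
    using n i K by (simp add: algebra_simps)
qed simp

theorem lemma1:
  fixes a :: "complex^'n" and B :: "complex^'m^'n"
    and X0 :: "complex^'n^'n" and Y0 :: "complex^'k^'m"
  assumes "is_diag X0"
  shows "concave_on UNIV (\<lambda>(x :: complex^'n, Y :: complex^'k^'m). Omega a B (diag_mat x) X0 Y Y0)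
         \<and> (\<forall>(X :: complex^'n^'n) (Y :: complex^'k^'m). is_diag X \<longrightarrow>
               (norm (a v* (X ** B ** Y)))^2 \<ge> Omega a B X X0 Y Y0)"
proof
  define M where "M = hconj B ** mconj (diag_mat a)"
  define c0 where "c0 = M *v vconj (diag_vec X0)"
  define u where "u = ((Y0 ** hconj Y0) *v c0) + c0"
  define K where "K = norm (hconj Y0 *v c0)^2 + 1/2 * norm u ^2"
  have Om: "Omega a B X X0 Y Y0 = inner u ((Y ** hconj Y0) *v c0 + M *v vconj (diag_vec X))
     - 1/2 * norm ((Y ** hconj Y0) *v c0 - M *v vconj (diag_vec X))^2 - K" for X Y
    unfolding Omega_def Let_def M_def c0_def u_def K_def inner_hdot by simp
  show "concave_on UNIV (\<lambda>(x :: complex^'n, Y :: complex^'k^'m). Omega a B (diag_mat x) X0 Y Y0)"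
  proof -
    have "concave_on UNIV (\<lambda>p. inner u ((\<lambda>(x :: complex^'n, Y :: complex^'k^'m). (Y ** hconj Y0) *v c0 + M *v vconj x) p)
       - 1/2 * norm ((\<lambda>(x :: complex^'n, Y :: complex^'k^'m). (Y ** hconj Y0) *v c0 - M *v vconj x) p)^2 - K)"
      apply (rule concave_gen)
       apply (auto simp: lin_mm lin_mv lin_mv1 lin_vconj algebra_simps)
      done
    then show ?thesis by (simp add: Om case_prod_unfold)
  qed
  show "\<forall>(X :: complex^'n^'n) (Y :: complex^'k^'m). is_diag X \<longrightarrow>
               (norm (a v* (X ** B ** Y)))^2 \<ge> Omega a B X X0 Y Y0"
  proof (intro allI impI)
    fix X :: "complex^'n^'n" and Y :: "complex^'k^'m"
    assume dX: "is_diag X"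
    define c where "c = M *v vconj (diag_vec X)"
    define P where "P = (Y ** hconj Y0) *v c0"
    define z where "z = hconj Y *v c"
    define z0 where "z0 = hconj Y0 *v c0"
    have L: "norm (a v* (X ** B ** Y)) = norm z"
      using lhs_eq[OF dX, of a B Y] by (simp add: z_def c_def M_def)
    have key: "inner z0 z = inner c P"
    proof -
      have "inner z0 z = inner z z0" by (simp add: inner_commute)
      also have "\<dots> = Re (hdot c (Y *v (hconj Y0 *v c0)))"
        by (simp add: inner_hdot z_def z0_def hdot_adj)
      also have "\<dots> = inner c P" by (simp add: inner_hdot P_def matrix_vector_mul_assoc)
      finally show ?thesis .
    qed
    have f1: "norm z ^2 \<ge> 2 * inner z0 z - norm z0 ^2"
      using inner_ge_zero[of "z - z0"]
      by (simp add: power2_norm_eq_inner inner_diff inner_commute)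
    have f2: "norm (P + c)^2 - norm (P - c)^2 = 4 * inner c P"
      by (simp add: power2_norm_eq_inner inner_diff inner_add inner_commute)
    have f3: "inner u (P + c) \<le> 1/2 * norm u^2 + 1/2 * norm (P + c)^2"
    proof -
      define w where "w = P + c"
      have "0 \<le> inner (u - w) (u - w)" by simp
      then show ?thesis unfolding w_def[symmetric]
        by (simp add: power2_norm_eq_inner inner_diff inner_commute)
    qed
    show "(norm (a v* (X ** B ** Y)))^2 \<ge> Omega a B X X0 Y Y0"
      unfolding Om L using f1 f2 f3 key
      by (simp add: K_def P_def c_def z0_def)
  qed
qed

end
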